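(* Let $\alpha\in[0,1]$ and $\beta\in\mathbb{N}_{\ge1}$, and let $V^\alpha_\beta(x)=(1-\alpha)x+\alpha\min\{x,\beta\}$. Let $\rho=\big(1-\alpha\,\beta^\beta e^{-\beta}/\beta!\big)^{-1}$ and define $F^\alpha_\beta:\mathbb{N}_{\ge1}\to\mathbb{R}$ recursively by $F^\alpha_\beta(1)=V^\alpha_\beta(1)$ and $$F^\alpha_\beta(x+1)=\max\Big\{\tfrac1\beta\big[xF^\alpha_\beta(x)-V^\alpha_\beta(x)\rho\big]+1,\;1-\alpha\Big\},\qquad x\ge1.$$ Let $\mathcal{G}$ be the set of all resource allocation games (with any finite number of players) in which every resource has welfare function $V^\alpha_\beta$. If every resource is assigned the local utility function $F^\alpha_\beta$, then $\mathrm{PoA}(\mathcal{G})=1/\rho$, and no other choice of a common local utility function achieves a larger price of anarchy on $\mathcal{G}$.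
   Context: A resource allocation game consists of a finite player set $N=\{1,\dots,n\}$, a finite resource set $\mathcal{R}$, action sets $\mathcal{A}_i\subseteq 2^{\mathcal{R}}$, welfare functions $W_r:\mathbb{N}\to\mathbb{R}$ and local utility functions $F_r:\mathbb{N}\to\mathbb{R}$. For $a\in\mathcal{A}=\prod_i\mathcal{A}_i$, $|a|_r=|\{i: r\in a_i\}|$, $W(a)=\sum_{r\in\cup_ia_i}W_r(|a|_r)$, $U_i(a)=\sum_{r\in a_i}F_r(|a|_r)$. A pure Nash equilibrium is $a^{ne}$ with $U_i(a^{ne})\ge U_i(a_i,a^{ne}_{-i})$ for all $a_i\in\mathcal{A}_i$ and $i$. $\mathrm{PoA}(G)=\min_{a\in\mathrm{NE}(G)}W(a)/\max_{a\in\mathcal{A}}W(a)$; for a set of games, $\mathrm{PoA}$ is the infimum over the set. *)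

theory Defs
  imports Complex_Main "HOL-Library.FuncSet"
begin

text \<open>All resources share the same welfare
  function W and the same local utility function F.\<close>

definition load :: "nat \<Rightarrow> (nat \<Rightarrow> nat set) \<Rightarrow> nat \<Rightarrow> nat" where
  "load n a r = card {i \<in> {..<n}. r \<in> a i}"

definition welfare :: "(nat \<Rightarrow> real) \<Rightarrow> nat \<Rightarrow> (nat \<Rightarrow> nat set) \<Rightarrow> real" where
  "welfare W n a = (\<Sum>r \<in> (\<Union>i<n. a i). W (load n a r))"

definition utility :: "(nat \<Rightarrow> real) \<Rightarrow> nat \<Rightarrow> (nat \<Rightarrow> nat set) \<Rightarrow> nat \<Rightarrow> real" where
  "utility F n a i = (\<Sum>r \<in> a i. F (load n a r))"

definition profiles :: "nat \<Rightarrow> (nat \<Rightarrow> nat set set) \<Rightarrow> (nat \<Rightarrow> nat set) set" where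
  "profiles n A = PiE {..<n} A"

definition is_NE :: "(nat \<Rightarrow> real) \<Rightarrow> nat \<Rightarrow> (nat \<Rightarrow> nat set set) \<Rightarrow> (nat \<Rightarrow> nat set) \<Rightarrow> bool" where
  "is_NE F n A a \<longleftrightarrow> a \<in> profiles n A \<and>
     (\<forall>i<n. \<forall>b\<in>A i. utility F n (a(i := b)) i \<le> utility F n a i)"

definition valid_game :: "nat \<Rightarrow> nat set \<Rightarrow> (nat \<Rightarrow> nat set set) \<Rightarrow> bool" where
  "valid_game n R A \<longleftrightarrow> finite R \<and> (\<forall>i<n. A i \<noteq> {} \<and> A i \<subseteq> Pow R)"

definition opt_welfare :: "(nat \<Rightarrow> real) \<Rightarrow> nat \<Rightarrow> (nat \<Rightarrow> nat set set) \<Rightarrow> real" where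
  "opt_welfare W n A = Max (welfare W n ` profiles n A)"

text \<open>Price of anarchy of a single game (convention: 1 if the optimal welfare is 0).\<close>
definition poa :: "(nat \<Rightarrow> real) \<Rightarrow> (nat \<Rightarrow> real) \<Rightarrow> nat \<Rightarrow> (nat \<Rightarrow> nat set set) \<Rightarrow> real" where
  "poa W F n A = (if opt_welfare W n A = 0 then 1
     else Inf ((\<lambda>a. welfare W n a / opt_welfare W n A) ` {a. is_NE F n A a}))"

definition poa_class :: "(nat \<Rightarrow> real) \<Rightarrow> (nat \<Rightarrow> real) \<Rightarrow> real" where
  "poa_class W F = Inf {poa W F n A | n R A. valid_game n R A}"

definition Vab :: "real \<Rightarrow> nat \<Rightarrow> nat \<Rightarrow> real" where
  "Vab \<alpha> \<beta> x = (1 - \<alpha>) * real x + \<alpha> * real (min x \<beta>)"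

definition rho :: "real \<Rightarrow> nat \<Rightarrow> real" where
  "rho \<alpha> \<beta> = 1 / (1 - \<alpha> * real \<beta> ^ \<beta> * exp (- real \<beta>) / fact \<beta>)"

text \<open>F at 0 is irrelevant (never evaluated) and set to 0.\<close>
fun Fab :: "real \<Rightarrow> nat \<Rightarrow> nat \<Rightarrow> real" where
  "Fab \<alpha> \<beta> 0 = 0"
| "Fab \<alpha> \<beta> (Suc 0) = Vab \<alpha> \<beta> 1"
| "Fab \<alpha> \<beta> (Suc (Suc x)) =
     max ((1 / real \<beta>) * (real (Suc x) * Fab \<alpha> \<beta> (Suc x) - Vab \<alpha> \<beta> (Suc x) * rho \<alpha> \<beta>) + 1)
         (1 - \<alpha>)"

end

theory Submission
  imports Defs "HOL-Library.Nat_Bijection"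
begin

definition ee :: "nat \<Rightarrow> nat \<Rightarrow> real" where
  "ee b j = real b ^ j / fact j"

lemma ee_pos: "b \<ge> 1 \<Longrightarrow> ee b j > 0" by (simp add: ee_def)

lemma ee_Suc: "ee b (Suc j) = ee b j * real b / real (Suc j)"
  by (simp add: ee_def field_simps)

lemma ee_sums: "(\<lambda>j. ee b j) sums exp (real b)"
proof -
  have "(\<lambda>n. real b ^ n /\<^sub>R fact n) sums exp (real b)" by (rule exp_converges)
  then show ?thesis by (simp add: ee_def divide_inverse mult.commute)
qed

lemma ee_tail_sums: "(\<lambda>i. ee b (i + a)) sums (exp (real b) - (\<Sum>j<a. ee b j))"
  using ee_sums sums_iff_shift' by blast

lemma ee_partial_le: assumes "b \<ge> 1" shows " (\<Sum>j<a. ee b j) \<le> exp (real b)"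
proof -
  have s: "(\<lambda>i. ee b (i + a)) sums (exp (real b) - (\<Sum>j<a. ee b j))" by (rule ee_tail_sums)
  have "0 \<le> (\<Sum>i. ee b (i + a))"
    using s assms ee_pos[of b] by (intro suminf_nonneg) (auto simp: sums_iff less_imp_le)
  then show ?thesis using s by (simp add: sums_iff)
qed

lemma ee_tail_bound:
  assumes "b \<ge> 1" "a > b"
  shows "exp (real b) - (\<Sum>j<a. ee b j) \<le> ee b a / (1 - real b / real a)"
proof -
  have le: "ee b (k + a) \<le> ee b a * (real b / real a) ^ k" for k
  proof (induction k)
    case 0 then show ?case by simp
  next
    case (Suc k)
    have "ee b (Suc k + a) = ee b (k + a) * real b / real (Suc (k + a))"
      by (simp add: ee_Suc)
    also have "\<dots> \<le> ee b (k + a) * real b / real a"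
      using assms ee_pos[of b "k+a"]
      by (intro divide_left_mono mult_nonneg_nonneg) auto
    also have "\<dots> \<le> ee b a * (real b / real a) ^ k * real b / real a"
      using Suc assms by (intro divide_right_mono mult_right_mono) auto
    finally show ?case by (simp add: field_simps)
  qed
  have g: "(\<lambda>k. ee b a * (real b / real a) ^ k) sums (ee b a * (1 / (1 - real b / real a)))"
    using assms by (intro sums_mult geometric_sums) auto
  show ?thesis using sums_le[OF _ ee_tail_sums[of b a] g] le by simp
qed


fun G :: "real \<Rightarrow> nat \<Rightarrow> nat \<Rightarrow> real" where
  "G \<alpha> \<beta> 0 = 0"
| "G \<alpha> \<beta> (Suc 0) = Vab \<alpha> \<beta> 1"
| "G \<alpha> \<beta> (Suc (Suc x)) =
     (1 / real \<beta>) * (real (Suc x) * G \<alpha> \<beta> (Suc x) - Vab \<alpha> \<beta> (Suc x) * rho \<alpha> \<beta>) + 1"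

fun Qf :: "nat \<Rightarrow> nat \<Rightarrow> real" where
  "Qf b 0 = 0"
| "Qf b (Suc 0) = 0"
| "Qf b (Suc (Suc a)) = real (Suc a) / real b * (1 + Qf b (Suc a))"

definition Cf :: "nat \<Rightarrow> nat \<Rightarrow> real" where
  "Cf b a = fact (a - 1) / real b ^ (a - 1) * (exp (real b) - (\<Sum>j<a. ee b j))"

definition pp :: "nat \<Rightarrow> real" where
  "pp b = ee b b * exp (- real b)"

lemma Vab_small: "x \<le> b \<Longrightarrow> Vab \<alpha> b x = real x"
  by (simp add: Vab_def algebra_simps)

lemma Vab_large: "b \<le> x \<Longrightarrow> Vab \<alpha> b x = (1 - \<alpha>) * real x + \<alpha> * real b"
  by (simp add: Vab_def)

lemma Vab_nonneg: "0 \<le> \<alpha> \<Longrightarrow> \<alpha> \<le> 1 \<Longrightarrow> 0 \<le> Vab \<alpha> b x"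
  by (simp add: Vab_def)

lemma Vab_le: "0 \<le> \<alpha> \<Longrightarrow> Vab \<alpha> b x \<le> real x"
proof -
  assume "0 \<le> \<alpha>"
  have "\<alpha> * real (min x b) \<le> \<alpha> * real x" using \<open>0 \<le> \<alpha>\<close> by (intro mult_left_mono) auto
  then show ?thesis by (simp add: Vab_def algebra_simps)
qed

lemma Vab_0[simp]: "Vab \<alpha> b 0 = 0" by (simp add: Vab_def)

lemma ee_fact_inv: assumes "b \<ge> 1" shows "ee b a * (fact a / real b ^ a) = 1"
proof -
  have "real b ^ a \<noteq> 0" using assms by simp
  moreover have "(fact a :: real) \<noteq> 0" by simp
  ultimately show ?thesis unfolding ee_def by simp
qed

lemma fe: "b \<ge> 1 \<Longrightarrow> fact a / real b ^ a * ee b a = 1"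
  using ee_fact_inv by (metis mult.commute)

lemma fe_Suc: assumes "b \<ge> 1" shows "fact (Suc a) / real b ^ (Suc a) * ee b a = real (Suc a) / real b"
proof -
  have "fact (Suc a) / real b ^ (Suc a) * ee b a = (real (Suc a) / real b) * (fact a / real b ^ a * ee b a)"
    by (simp add: field_simps)
  then show ?thesis using fe[OF assms, of a] by (metis mult_1_right)
qed

lemma ee_pred: "b \<ge> 1 \<Longrightarrow> ee b (b - 1) = ee b b"
proof -
  assume "b \<ge> 1"
  then obtain c where c: "b = Suc c" by (cases b) auto
  show ?thesis unfolding c by (simp add: ee_Suc)
qed

lemma pp_bounds: assumes "b \<ge> 1" shows "0 < pp b" "pp b < 1"
proof -
  show "0 < pp b" using assms by (simp add: pp_def ee_pos)
  have "(\<Sum>j<Suc b. ee b j) \<le> exp (real b)" using ee_partial_le assms by blast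
  moreover have "(\<Sum>j<Suc b. ee b j) \<ge> ee b 0 + ee b b"
  proof -
    have "(\<Sum>j\<in>{0,b}. ee b j) \<le> (\<Sum>j<Suc b. ee b j)"
      using assms ee_pos[of b] by (intro sum_mono2) (auto simp: less_imp_le)
    then show ?thesis using assms by simp
  qed
  moreover have "ee b 0 = 1" by (simp add: ee_def)
  ultimately have "ee b b < exp (real b)" by linarith
  then have "ee b b * exp (- real b) < exp (real b) * exp (- real b)"
    by (intro mult_strict_right_mono) auto
  then show "pp b < 1" by (simp add: pp_def exp_minus_inverse)
qed

lemma rho_pp: "rho \<alpha> b = 1 / (1 - \<alpha> * pp b)"
  by (simp add: rho_def pp_def ee_def)

context
  fixes \<alpha> :: real and \<beta> :: nat
  assumes a0: "0 \<le> \<alpha>" and a1: "\<alpha> \<le> 1" and b1: "1 \<le> \<beta>"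
begin

lemma den_pos: "0 < 1 - \<alpha> * pp \<beta>"
proof -
  have "\<alpha> * pp \<beta> \<le> 1 * pp \<beta>" using a1 pp_bounds[OF b1] by (intro mult_right_mono) auto
  then show ?thesis using pp_bounds[OF b1] by linarith
qed

lemma rho_ge1: "1 \<le> rho \<alpha> \<beta>"
  using den_pos a0 pp_bounds[OF b1] by (simp add: rho_pp field_simps)

lemma rho_eq: "rho \<alpha> \<beta> - 1 = rho \<alpha> \<beta> * \<alpha> * pp \<beta>"
  using den_pos by (simp add: rho_pp field_simps)

lemma Q_nonneg: "0 \<le> Qf \<beta> a"
  by (induction \<beta> a rule: Qf.induct) auto

lemma G_Q: "1 \<le> a \<Longrightarrow> a \<le> Suc \<beta> \<Longrightarrow> G \<alpha> \<beta> a = 1 - (rho \<alpha> \<beta> - 1) * Qf \<beta> a"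
proof (induction a rule: dec_induct)
  case base then show ?case using b1 by (simp add: Vab_small)
next
  case (step a)
  then obtain c where c: "a = Suc c" by (cases a) auto
  have V: "Vab \<alpha> \<beta> a = real a" using step by (intro Vab_small) auto
  have "G \<alpha> \<beta> (Suc a) = (1 / real \<beta>) * (real a * G \<alpha> \<beta> a - real a * rho \<alpha> \<beta>) + 1"
    unfolding c using V c by (simp add: mult.commute)
  also have "\<dots> = 1 - (rho \<alpha> \<beta> - 1) * (real a / real \<beta> * (1 + Qf \<beta> a))"
  proof -
    have IH: "G \<alpha> \<beta> a = 1 - (rho \<alpha> \<beta> - 1) * Qf \<beta> a" using step by simp
    show ?thesis unfolding IH using b1 by (simp add: field_simps)
  qed
  also have "real a / real \<beta> * (1 + Qf \<beta> a) = Qf \<beta> (Suc a)" unfolding c by simp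
  finally show ?case .
qed

lemma Q_closed: "1 \<le> a \<Longrightarrow> Qf \<beta> a = fact (a - 1) / real \<beta> ^ (a - 1) * (\<Sum>j<a - 1. ee \<beta> j)"
proof (induction a rule: dec_induct)
  case base then show ?case by simp
next
  case (step a)
  then obtain c where c: "a = Suc c" by (cases a) auto
  have "Qf \<beta> (Suc a) = real a / real \<beta> * (1 + Qf \<beta> a)" unfolding c by simp
  also have "\<dots> = real a / real \<beta> + real a / real \<beta> * (fact c / real \<beta> ^ c * (\<Sum>j<c. ee \<beta> j))"
    using step unfolding c by (simp add: algebra_simps)
  also have "\<dots> = fact a / real \<beta> ^ a * ee \<beta> c + fact a / real \<beta> ^ a * (\<Sum>j<c. ee \<beta> j)"
  proof -
    have c1: "real a / real \<beta> = fact a / real \<beta> ^ a * ee \<beta> c" using fe_Suc[OF b1, of c] c by simp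
    have c2: "real a / real \<beta> * (fact c / real \<beta> ^ c * (\<Sum>j<c. ee \<beta> j))
       = fact a / real \<beta> ^ a * (\<Sum>j<c. ee \<beta> j)" unfolding c by (simp add: field_simps)
    show ?thesis unfolding c2 unfolding c1 ..
  qed
  also have "\<dots> = fact a / real \<beta> ^ a * (\<Sum>j<a. ee \<beta> j)"
  proof -
    have "(\<Sum>j<a. ee \<beta> j) = (\<Sum>j<c. ee \<beta> j) + ee \<beta> c" unfolding c by simp
    then show ?thesis by (simp only: distrib_left add.commute)
  qed
  finally show ?case by simp
qed

lemma C_step: "1 \<le> a \<Longrightarrow> Cf \<beta> (Suc a) = real a / real \<beta> * Cf \<beta> a - 1"
proof -
  assume a: "1 \<le> a"
  then obtain c where c: "a = Suc c" by (cases a) auto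
  have e: "fact a / real \<beta> ^ a * ee \<beta> a = 1" using fe[OF b1] .
  have "Cf \<beta> (Suc a) = fact a / real \<beta> ^ a * (exp (real \<beta>) - (\<Sum>j<a. ee \<beta> j)) - fact a / real \<beta> ^ a * ee \<beta> a"
    by (simp add: Cf_def algebra_simps)
  also have "fact a / real \<beta> ^ a * (exp (real \<beta>) - (\<Sum>j<a. ee \<beta> j)) = real a / real \<beta> * Cf \<beta> a"
    using b1 unfolding Cf_def c by (simp add: field_simps)
  finally show ?thesis unfolding e .
qed

lemma base_identity:
  "1 - (rho \<alpha> \<beta> - 1) * Qf \<beta> \<beta> = rho \<alpha> \<beta> * (1 - \<alpha>) + (rho \<alpha> \<beta> - 1) * Cf \<beta> \<beta>"
proof -
  define K where "K = fact (\<beta> - 1) / real \<beta> ^ (\<beta> - 1)"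
  define S where "S = (\<Sum>j<\<beta> - 1. ee \<beta> j)"
  have sumsplit: "(\<Sum>j<\<beta>. ee \<beta> j) = S + ee \<beta> (\<beta> - 1)"
  proof -
    obtain c where c: "\<beta> = Suc c" using b1 by (cases \<beta>) auto
    show ?thesis unfolding S_def c by simp
  qed
  have Q: "Qf \<beta> \<beta> = K * S" unfolding K_def S_def using Q_closed b1 by simp
  have C: "Cf \<beta> \<beta> = K * (exp (real \<beta>) - S - ee \<beta> \<beta>)"
    unfolding Cf_def K_def using sumsplit ee_pred[OF b1] by simp
  have K1: "K * ee \<beta> \<beta> = 1"
    unfolding K_def using fe[OF b1, of "\<beta> - 1"] ee_pred[OF b1] by metis
  have QC: "pp \<beta> * (Qf \<beta> \<beta> + Cf \<beta> \<beta>) = 1 - pp \<beta>"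
  proof -
    have "pp \<beta> * (Qf \<beta> \<beta> + Cf \<beta> \<beta>) = ee \<beta> \<beta> * exp (- real \<beta>) * (K * exp (real \<beta>) - K * ee \<beta> \<beta>)"
      unfolding Q C pp_def by (simp add: algebra_simps)
    also have "\<dots> = (K * ee \<beta> \<beta>) * (exp (- real \<beta>) * exp (real \<beta>)) - (K * ee \<beta> \<beta>) * (ee \<beta> \<beta> * exp (- real \<beta>))"
      by (simp add: algebra_simps)
    also have "\<dots> = 1 - pp \<beta>"
    proof -
      have "exp (- real \<beta>) * exp (real \<beta>) = 1" by (simp add: exp_add[symmetric])
      then show ?thesis using K1 by (simp add: pp_def)
    qed
    finally show ?thesis .
  qed
  have r: "rho \<alpha> \<beta> - 1 = rho \<alpha> \<beta> * \<alpha> * pp \<beta>" by (rule rho_eq)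
  have "(rho \<alpha> \<beta> - 1) * (Qf \<beta> \<beta> + Cf \<beta> \<beta>) = rho \<alpha> \<beta> * \<alpha> * (1 - pp \<beta>)"
    using QC r by (metis mult.assoc)
  then have h2: "(rho \<alpha> \<beta> - 1) * Qf \<beta> \<beta> + (rho \<alpha> \<beta> - 1) * Cf \<beta> \<beta> = rho \<alpha> \<beta> * \<alpha> - rho \<alpha> \<beta> * \<alpha> * pp \<beta>"
    by (simp add: algebra_simps)
  have h3: "rho \<alpha> \<beta> * (1 - \<alpha>) = rho \<alpha> \<beta> - rho \<alpha> \<beta> * \<alpha>" by (simp add: algebra_simps)
  show ?thesis using h2 h3 r by linarith
qed

lemma G_C: "\<beta> \<le> a \<Longrightarrow> G \<alpha> \<beta> a = rho \<alpha> \<beta> * (1 - \<alpha>) + (rho \<alpha> \<beta> - 1) * Cf \<beta> a"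
proof (induction a rule: dec_induct)
  case base then show ?case using G_Q[of \<beta>] b1 base_identity by simp
next
  case (step a)
  then obtain c where c: "a = Suc c" using b1 by (cases a) auto
  have V: "Vab \<alpha> \<beta> a = (1 - \<alpha>) * real a + \<alpha> * real \<beta>" using step by (intro Vab_large) auto
  have Cs: "Cf \<beta> (Suc a) = real a / real \<beta> * Cf \<beta> a - 1" using step b1 by (intro C_step) auto
  have "G \<alpha> \<beta> (Suc a) = (1 / real \<beta>) * (real a * G \<alpha> \<beta> a - Vab \<alpha> \<beta> a * rho \<alpha> \<beta>) + 1"
    unfolding c by simp
  also have "\<dots> = rho \<alpha> \<beta> * (1 - \<alpha>) + (rho \<alpha> \<beta> - 1) * (real a / real \<beta> * Cf \<beta> a - 1)"
    unfolding V step.IH using b1 by (simp add: field_simps)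
  finally show ?case using Cs by simp
qed

end

context
  fixes \<alpha> :: real and \<beta> :: nat
  assumes a0: "0 \<le> \<alpha>" and a1: "\<alpha> \<le> 1" and b1: "1 \<le> \<beta>"
begin

lemma C_nonneg: "0 \<le> Cf \<beta> a"
  unfolding Cf_def using ee_partial_le[OF b1, of a] by (intro mult_nonneg_nonneg) auto

lemma C_tail: assumes "\<beta> < a" shows "(real a - real \<beta>) * Cf \<beta> a \<le> real \<beta>"
proof -
  obtain c where c: "a = Suc c" using assms by (cases a) auto
  define K where "K = fact c / real \<beta> ^ c"
  have K0: "0 \<le> K" unfolding K_def by simp
  have Kee: "K * ee \<beta> a = real \<beta> / real a"
  proof -
    have "K * ee \<beta> a = (real \<beta> / real (Suc c)) * (fact c / real \<beta> ^ c * ee \<beta> c)"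
      unfolding K_def c by (simp add: ee_Suc mult_ac)
    then show ?thesis using fe[OF b1, of c] c by (metis mult_1_right)
  qed
  have t: "exp (real \<beta>) - (\<Sum>j<a. ee \<beta> j) \<le> ee \<beta> a / (1 - real \<beta> / real a)"
    using ee_tail_bound[OF b1 assms] .
  have "Cf \<beta> a = K * (exp (real \<beta>) - (\<Sum>j<a. ee \<beta> j))" unfolding Cf_def K_def c by simp
  also have "\<dots> \<le> K * (ee \<beta> a / (1 - real \<beta> / real a))" using t K0 by (rule mult_left_mono)
  also have "\<dots> = (real \<beta> / real a) / (1 - real \<beta> / real a)" using Kee by simp
  also have "\<dots> = real \<beta> / (real a - real \<beta>)" using assms by (simp add: field_simps)
  finally have "Cf \<beta> a \<le> real \<beta> / (real a - real \<beta>)" .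
  then show ?thesis using assms by (simp add: field_simps)
qed

lemma C_dec: assumes "\<beta> \<le> a" shows "Cf \<beta> (Suc a) \<le> Cf \<beta> a"
proof (cases "a = \<beta>")
  case True
  then show ?thesis using C_step[OF a0 a1 b1, of a] b1 by simp
next
  case False
  then have "\<beta> < a" using assms by simp
  then have t: "(real a - real \<beta>) * Cf \<beta> a \<le> real \<beta>" by (rule C_tail)
  have "Cf \<beta> (Suc a) = real a / real \<beta> * Cf \<beta> a - 1" using C_step[OF a0 a1 b1, of a] assms b1 by simp
  also have "\<dots> \<le> Cf \<beta> a" using t b1 by (simp add: field_simps)
  finally show ?thesis .
qed

lemma C_le: "\<beta> \<le> a \<Longrightarrow> Cf \<beta> a \<le> Cf \<beta> \<beta>"
proof (induction a rule: dec_induct)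
  case base then show ?case by simp
next
  case (step a) then show ?case using C_dec[of a] by simp
qed

lemma pC: "pp \<beta> * (1 + Cf \<beta> \<beta>) \<le> 1"
proof -
  define K where "K = fact (\<beta> - 1) / real \<beta> ^ (\<beta> - 1)"
  have K1: "K * ee \<beta> \<beta> = 1"
    unfolding K_def using fe[OF b1, of "\<beta> - 1"] ee_pred[OF b1] by metis
  have Cb: "Cf \<beta> \<beta> = K * (exp (real \<beta>) - (\<Sum>j<\<beta>. ee \<beta> j))" unfolding Cf_def K_def by simp
  have "pp \<beta> * Cf \<beta> \<beta> = (K * ee \<beta> \<beta>) * (exp (- real \<beta>) * exp (real \<beta>)) - (K * ee \<beta> \<beta>) * exp (- real \<beta>) * (\<Sum>j<\<beta>. ee \<beta> j)"
    unfolding Cb pp_def by (simp add: algebra_simps)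
  also have "\<dots> = 1 - exp (- real \<beta>) * (\<Sum>j<\<beta>. ee \<beta> j)"
  proof -
    have "exp (- real \<beta>) * exp (real \<beta>) = 1" by (simp add: exp_add[symmetric])
    then show ?thesis using K1 by simp
  qed
  finally have e1: "pp \<beta> * Cf \<beta> \<beta> = 1 - exp (- real \<beta>) * (\<Sum>j<\<beta>. ee \<beta> j)" .
  have "ee \<beta> \<beta> \<le> (\<Sum>j<\<beta>. ee \<beta> j)"
  proof -
    have "ee \<beta> (\<beta> - 1) \<le> (\<Sum>j<\<beta>. ee \<beta> j)"
      using b1 ee_pos[OF b1] by (intro member_le_sum) (auto simp: less_imp_le)
    then show ?thesis using ee_pred[OF b1] by simp
  qed
  then have m: "ee \<beta> \<beta> * exp (- real \<beta>) \<le> (\<Sum>j<\<beta>. ee \<beta> j) * exp (- real \<beta>)"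
    by (rule mult_right_mono) simp
  have d: "pp \<beta> * (1 + Cf \<beta> \<beta>) = pp \<beta> + pp \<beta> * Cf \<beta> \<beta>" by (simp add: algebra_simps)
  have c: "exp (- real \<beta>) * (\<Sum>j<\<beta>. ee \<beta> j) = (\<Sum>j<\<beta>. ee \<beta> j) * exp (- real \<beta>)" by simp
  have pdef: "pp \<beta> = ee \<beta> \<beta> * exp (- real \<beta>)" by (simp add: pp_def)
  show ?thesis using m d c e1 pdef by linarith
qed

lemma Q_bound: "1 \<le> a \<Longrightarrow> a \<le> \<beta> \<Longrightarrow> Qf \<beta> a * (real \<beta> - real a + 1) \<le> real a - 1"
proof (induction a rule: dec_induct)
  case base then show ?case by simp
next
  case (step a)
  then obtain c where c: "a = Suc c" by (cases a) auto
  have IH: "Qf \<beta> a * (real \<beta> - real a + 1) \<le> real a - 1" using step by simp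
  have h: "(1 + Qf \<beta> a) * (real \<beta> - real a + 1) \<le> real \<beta>" using IH by (simp add: algebra_simps)
  have Qs: "Qf \<beta> (Suc a) = real a / real \<beta> * (1 + Qf \<beta> a)" unfolding c by simp
  have pos: "0 \<le> real a / real \<beta> * (1 + Qf \<beta> a)" using Q_nonneg[OF a0 a1 b1, of a] by simp
  have "Qf \<beta> (Suc a) * (real \<beta> - real (Suc a) + 1) = real a / real \<beta> * (1 + Qf \<beta> a) * (real \<beta> - real a)"
    unfolding Qs by simp
  also have "\<dots> \<le> real a / real \<beta> * (1 + Qf \<beta> a) * (real \<beta> - real a + 1)"
    using pos by (intro mult_left_mono) auto
  also have "\<dots> = real a / real \<beta> * ((1 + Qf \<beta> a) * (real \<beta> - real a + 1))" by simp
  also have "\<dots> \<le> real a / real \<beta> * real \<beta>" using h by (intro mult_left_mono) auto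
  also have "\<dots> = real a" using b1 by simp
  finally show ?case by simp
qed

lemma Q_mono: "1 \<le> a \<Longrightarrow> a < \<beta> \<Longrightarrow> Qf \<beta> a \<le> Qf \<beta> (Suc a)"
proof -
  assume a: "1 \<le> a" "a < \<beta>"
  then obtain c where c: "a = Suc c" by (cases a) auto
  have q0: "0 \<le> Qf \<beta> a" using Q_nonneg[OF a0 a1 b1] .
  have qb: "Qf \<beta> a * (real \<beta> - real a + 1) \<le> real a - 1" using Q_bound a by simp
  have "Qf \<beta> a * (real \<beta> - real a) \<le> Qf \<beta> a * (real \<beta> - real a + 1)" using q0 by (intro mult_left_mono) auto
  then have h: "Qf \<beta> a * real \<beta> \<le> real a + real a * Qf \<beta> a" using qb by (simp add: algebra_simps)
  have "real \<beta> * Qf \<beta> (Suc a) = real a + real a * Qf \<beta> a" unfolding c using b1 by (simp add: field_simps)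
  then have "real \<beta> * Qf \<beta> a \<le> real \<beta> * Qf \<beta> (Suc a)" using h by (simp add: mult.commute)
  then show ?thesis using b1 by simp
qed

lemma Q_le: "1 \<le> a \<Longrightarrow> a \<le> \<beta> \<Longrightarrow> Qf \<beta> a \<le> Qf \<beta> \<beta>"
proof -
  assume "1 \<le> a" "a \<le> \<beta>"
  have "\<forall>k. a + k \<le> \<beta> \<longrightarrow> Qf \<beta> a \<le> Qf \<beta> (a + k)"
  proof
    fix k show "a + k \<le> \<beta> \<longrightarrow> Qf \<beta> a \<le> Qf \<beta> (a + k)"
    proof (induction k)
      case 0 then show ?case by simp
    next
      case (Suc k)
      then show ?case using Q_mono[of "a + k"] \<open>1 \<le> a\<close> by fastforce
    qed
  qed
  then show ?thesis using \<open>a \<le> \<beta>\<close> by (metis le_add_diff_inverse order_refl)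
qed

lemma rho_nonneg: "0 \<le> rho \<alpha> \<beta> - 1" using rho_ge1[OF a0 a1 b1] by simp

lemma G_ge: "1 \<le> a \<Longrightarrow> 1 - \<alpha> \<le> G \<alpha> \<beta> a"
proof -
  assume a: "1 \<le> a"
  have Gb: "1 - \<alpha> \<le> G \<alpha> \<beta> a" if "\<beta> \<le> a" for a
  proof -
    have "1 - \<alpha> \<le> rho \<alpha> \<beta> * (1 - \<alpha>)" using mult_right_mono[OF rho_ge1[OF a0 a1 b1], of "1 - \<alpha>"] a1
      by simp
    moreover have "0 \<le> (rho \<alpha> \<beta> - 1) * Cf \<beta> a" using rho_nonneg C_nonneg by simp
    ultimately show ?thesis using G_C[OF a0 a1 b1 that] by linarith
  qed
  show ?thesis
  proof (cases "\<beta> \<le> a")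
    case True then show ?thesis by (rule Gb)
  next
    case False
    have "Qf \<beta> a \<le> Qf \<beta> \<beta>" using Q_le a False by simp
    then have "(rho \<alpha> \<beta> - 1) * Qf \<beta> a \<le> (rho \<alpha> \<beta> - 1) * Qf \<beta> \<beta>" using rho_nonneg by (intro mult_left_mono)
    then have "G \<alpha> \<beta> \<beta> \<le> G \<alpha> \<beta> a" using G_Q[OF a0 a1 b1, of a] G_Q[OF a0 a1 b1, of \<beta>] a False b1 by simp
    then show ?thesis using Gb[of \<beta>] by simp
  qed
qed

lemma G_le: "1 \<le> a \<Longrightarrow> G \<alpha> \<beta> a \<le> 1"
proof -
  assume a: "1 \<le> a"
  show ?thesis
  proof (cases "\<beta> \<le> a")
    case False
    then show ?thesis using G_Q[OF a0 a1 b1, of a] a rho_nonneg Q_nonneg[OF a0 a1 b1, of a] by simp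
  next
    case True
    have r: "rho \<alpha> \<beta> - 1 = rho \<alpha> \<beta> * \<alpha> * pp \<beta>" by (rule rho_eq[OF a0 a1 b1])
    have G: "G \<alpha> \<beta> a = rho \<alpha> \<beta> * (1 - \<alpha> + \<alpha> * pp \<beta> * Cf \<beta> a)"
      using G_C[OF a0 a1 b1 True] r by (simp add: algebra_simps)
    have "pp \<beta> * (1 + Cf \<beta> a) \<le> pp \<beta> * (1 + Cf \<beta> \<beta>)"
      using C_le[OF True] pp_bounds[OF b1] by (intro mult_left_mono) auto
    then have "pp \<beta> * (1 + Cf \<beta> a) \<le> 1" using pC by simp
    then have "\<alpha> * (pp \<beta> * (1 + Cf \<beta> a)) \<le> \<alpha>" using a0 by (metis mult_left_le)
    then have X: "1 - \<alpha> + \<alpha> * pp \<beta> * Cf \<beta> a \<le> 1 - \<alpha> * pp \<beta>" by (simp add: algebra_simps)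
    have rp: "0 \<le> rho \<alpha> \<beta>" using rho_ge1[OF a0 a1 b1] by simp
    have "G \<alpha> \<beta> a \<le> rho \<alpha> \<beta> * (1 - \<alpha> * pp \<beta>)" unfolding G using X rp by (rule mult_left_mono)
    also have "\<dots> = 1" using den_pos[OF a0 a1 b1] by (simp add: rho_pp)
    finally show ?thesis .
  qed
qed

lemma V5: assumes "\<beta> < a" shows "(real a - real \<beta>) * G \<alpha> \<beta> a + real \<beta> \<le> rho \<alpha> \<beta> * Vab \<alpha> \<beta> a"
proof -
  have t: "(real a - real \<beta>) * Cf \<beta> a \<le> real \<beta>" by (rule C_tail[OF assms])
  then have t2: "(rho \<alpha> \<beta> - 1) * ((real a - real \<beta>) * Cf \<beta> a) \<le> (rho \<alpha> \<beta> - 1) * real \<beta>"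
    using rho_nonneg by (intro mult_left_mono)
  have G: "G \<alpha> \<beta> a = rho \<alpha> \<beta> * (1 - \<alpha>) + (rho \<alpha> \<beta> - 1) * Cf \<beta> a" using G_C[OF a0 a1 b1] assms by simp
  have V: "Vab \<alpha> \<beta> a = (1 - \<alpha>) * real a + \<alpha> * real \<beta>" using assms by (intro Vab_large) auto
  show ?thesis unfolding G V using t2 by (simp add: algebra_simps)
qed

lemma V4: assumes "1 \<le> a" "a < \<beta>" shows "real \<beta> \<le> (real \<beta> - real a) * G \<alpha> \<beta> (Suc a) + rho \<alpha> \<beta> * real a"
proof -
  have qb: "Qf \<beta> (Suc a) * (real \<beta> - real a) \<le> real a" using Q_bound[of "Suc a"] assms by simp
  then have t2: "(rho \<alpha> \<beta> - 1) * (Qf \<beta> (Suc a) * (real \<beta> - real a)) \<le> (rho \<alpha> \<beta> - 1) * real a"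
    using rho_nonneg by (intro mult_left_mono)
  have G: "G \<alpha> \<beta> (Suc a) = 1 - (rho \<alpha> \<beta> - 1) * Qf \<beta> (Suc a)" using G_Q[OF a0 a1 b1, of "Suc a"] assms by simp
  show ?thesis unfolding G using t2 by (simp add: algebra_simps)
qed

lemma Fab_G: "1 \<le> a \<Longrightarrow> Fab \<alpha> \<beta> a = G \<alpha> \<beta> a"
proof (induction a rule: dec_induct)
  case base then show ?case by simp
next
  case (step a)
  then obtain c where c: "a = Suc c" by (cases a) auto
  have "Fab \<alpha> \<beta> (Suc a) = max (G \<alpha> \<beta> (Suc a)) (1 - \<alpha>)" unfolding c using step c by simp
  then show ?case using G_ge[of "Suc a"] by simp
qed

end

lemma core_real:
  fixes x y z b \<rho> \<alpha> f g Va Vt :: real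
  assumes x0: "0 \<le> x" and y0: "0 \<le> y" and z0: "0 \<le> z"
    and K: "x + z \<le> x + b \<Longrightarrow> 0 \<le> \<rho> * Va - b + (b - (x + z)) * g + x * (g - f)"
    and K5: "b < z \<Longrightarrow> (x + z - b) * f + b \<le> \<rho> * Va"
    and g1: "1 - \<alpha> \<le> g" "g \<le> 1" and f1: "1 - \<alpha> \<le> f"
    and Vt1: "y + z \<le> b \<Longrightarrow> Vt = y + z"
    and Vt2: "b \<le> y + z \<Longrightarrow> Vt = (1 - \<alpha>) * (y + z) + \<alpha> * b"
  shows "Vt \<le> \<rho> * Va - x * f + y * g"
proof (cases "y + z \<le> b")
  case True
  have h: "y * (1 - g) \<le> (b - z) * (1 - g)" using True g1 by (intro mult_right_mono) auto
  have k: "0 \<le> \<rho> * Va - b + (b - (x + z)) * g + x * (g - f)" using K True z0 y0 by linarith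
  show ?thesis using Vt1[OF True] h k by (simp add: algebra_simps)
next
  case False
  then have Vt: "Vt = (1 - \<alpha>) * (y + z) + \<alpha> * b" using Vt2 by simp
  show ?thesis
  proof (cases "z \<le> b")
    case True
    have h: "(b - z) * (g - (1 - \<alpha>)) \<le> y * (g - (1 - \<alpha>))" using False g1 by (intro mult_right_mono) auto
    have k: "0 \<le> \<rho> * Va - b + (b - (x + z)) * g + x * (g - f)" using K True by linarith
    show ?thesis unfolding Vt using h k by (simp add: algebra_simps)
  next
    case zb: False
    have h: "0 \<le> y * (g - (1 - \<alpha>))" using y0 g1 by simp
    have h2: "(z - b) * (1 - \<alpha>) \<le> (z - b) * f" using zb f1 by (intro mult_left_mono) auto
    have k: "(x + z - b) * f + b \<le> \<rho> * Va" using K5 zb by simp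
    show ?thesis unfolding Vt using h h2 k by (simp add: algebra_simps)
  qed
qed

context
  fixes \<alpha> :: real and \<beta> :: nat
  assumes a0: "0 \<le> \<alpha>" and a1: "\<alpha> \<le> 1" and b1: "1 \<le> \<beta>"
begin

lemma G_rec: "1 \<le> a \<Longrightarrow> real \<beta> * G \<alpha> \<beta> (Suc a) = real a * G \<alpha> \<beta> a - rho \<alpha> \<beta> * Vab \<alpha> \<beta> a + real \<beta>"
proof -
  assume "1 \<le> a"
  then obtain c where c: "a = Suc c" by (cases a) auto
  show ?thesis unfolding c using b1 by (simp add: field_simps)
qed

lemma K_nonneg:
  assumes a: "1 \<le> a" and xa: "x \<le> a" and xb: "a \<le> x + \<beta>"
  shows "0 \<le> rho \<alpha> \<beta> * Vab \<alpha> \<beta> a - real \<beta> + (real \<beta> - real a) * G \<alpha> \<beta> (Suc a)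
              + real x * (G \<alpha> \<beta> (Suc a) - G \<alpha> \<beta> a)"
proof -
  define f where "f = G \<alpha> \<beta> a"
  define g where "g = G \<alpha> \<beta> (Suc a)"
  define L where "L = (\<lambda>t::real. rho \<alpha> \<beta> * Vab \<alpha> \<beta> a - real \<beta> + (real \<beta> - real a) * g + t * (g - f))"
  have La: "L (real a) = 0" unfolding L_def f_def g_def using G_rec[OF a] by (simp add: algebra_simps)
  define x0 where "x0 = (if a \<le> \<beta> then 0 else real a - real \<beta>)"
  have Lx0: "0 \<le> L x0"
  proof (cases "a \<le> \<beta>")
    case True
    then have V: "Vab \<alpha> \<beta> a = real a" by (rule Vab_small)
    show ?thesis
    proof (cases "a = \<beta>")
      case True
      then show ?thesis unfolding L_def x0_def using V rho_ge1[OF a0 a1 b1] b1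
        by (simp add: algebra_simps)
    next
      case False
      then have "a < \<beta>" using True by simp
      then have "real \<beta> \<le> (real \<beta> - real a) * g + rho \<alpha> \<beta> * real a" unfolding g_def using V4[OF a0 a1 b1 a] by simp
      then show ?thesis unfolding L_def x0_def using V True by (simp add: algebra_simps)
    qed
  next
    case False
    then have "\<beta> < a" by simp
    have v5: "(real a - real \<beta>) * f + real \<beta> \<le> rho \<alpha> \<beta> * Vab \<alpha> \<beta> a" unfolding f_def using V5[OF a0 a1 b1 \<open>\<beta> < a\<close>] .
    show ?thesis unfolding L_def x0_def using False v5 by (simp add: algebra_simps)
  qed
  have x0x: "x0 \<le> real x" unfolding x0_def using xb by auto
  have xa': "real x \<le> real a" using xa by simp
  have x0a: "x0 \<le> real a" using x0x xa' by simp
  have "0 \<le> L (real x)"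
  proof (cases "0 \<le> g - f")
    case True
    have "L (real x) = L x0 + (real x - x0) * (g - f)" unfolding L_def by (simp add: algebra_simps)
    moreover have "0 \<le> (real x - x0) * (g - f)" using True x0x by simp
    ultimately show ?thesis using Lx0 by simp
  next
    case False
    have "L (real x) = L (real a) + (real a - real x) * (f - g)" unfolding L_def by (simp add: algebra_simps)
    moreover have "0 \<le> (real a - real x) * (f - g)" using False xa' by simp
    ultimately show ?thesis using La by simp
  qed
  then show ?thesis unfolding L_def f_def g_def .
qed

lemma res_ineq:
  fixes x y z :: nat
  shows "Vab \<alpha> \<beta> (y + z) \<le> rho \<alpha> \<beta> * Vab \<alpha> \<beta> (x + z) - real x * Fab \<alpha> \<beta> (x + z) + real y * Fab \<alpha> \<beta> (Suc (x + z))"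
proof (cases "x + z = 0")
  case True
  then have "x = 0" "z = 0" by auto
  moreover have "Fab \<alpha> \<beta> (Suc 0) = 1" using b1 by (simp add: Vab_def)
  ultimately show ?thesis using Vab_le[OF a0, of \<beta> y] by simp
next
  case False
  define a where "a = x + z"
  have a: "1 \<le> a" using False a_def by linarith
  have F1: "Fab \<alpha> \<beta> a = G \<alpha> \<beta> a" using Fab_G[OF a0 a1 b1 a] .
  have F2: "Fab \<alpha> \<beta> (Suc a) = G \<alpha> \<beta> (Suc a)" using Fab_G[OF a0 a1 b1, of "Suc a"] by simp
  have "Vab \<alpha> \<beta> (y + z) \<le> rho \<alpha> \<beta> * Vab \<alpha> \<beta> a - real x * G \<alpha> \<beta> a + real y * G \<alpha> \<beta> (Suc a)"
  proof (rule core_real[where b = "real \<beta>" and z = "real z" and \<alpha> = \<alpha>])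
    show "0 \<le> real x" "0 \<le> real y" "0 \<le> real z" by simp_all
    show "0 \<le> rho \<alpha> \<beta> * Vab \<alpha> \<beta> a - real \<beta> + (real \<beta> - (real x + real z)) * G \<alpha> \<beta> (Suc a) + real x * (G \<alpha> \<beta> (Suc a) - G \<alpha> \<beta> a)"
      if "real x + real z \<le> real x + real \<beta>"
      using K_nonneg[OF a, of x] that a_def by simp
    show "(real x + real z - real \<beta>) * G \<alpha> \<beta> a + real \<beta> \<le> rho \<alpha> \<beta> * Vab \<alpha> \<beta> a" if "real \<beta> < real z"
      using V5[OF a0 a1 b1, of a] that a_def by simp
    show "1 - \<alpha> \<le> G \<alpha> \<beta> (Suc a)" "G \<alpha> \<beta> (Suc a) \<le> 1" "1 - \<alpha> \<le> G \<alpha> \<beta> a"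
      using G_ge[OF a0 a1 b1] G_le[OF a0 a1 b1] a by auto
    show "Vab \<alpha> \<beta> (y + z) = real y + real z" if "real y + real z \<le> real \<beta>"
      using that by (subst Vab_small) auto
    show "Vab \<alpha> \<beta> (y + z) = (1 - \<alpha>) * (real y + real z) + \<alpha> * real \<beta>" if "real \<beta> \<le> real y + real z"
      using that by (subst Vab_large) auto
  qed
  then show ?thesis using F1 F2 a_def by simp
qed

end

lemma load_split:
  assumes "i < n"
  shows "load n a r = card {j\<in>{..<n}. j \<noteq> i \<and> r \<in> a j} + (if r \<in> a i then 1 else 0)"
proof -
  let ?S = "{j\<in>{..<n}. j \<noteq> i \<and> r \<in> a j}"
  have fin: "finite ?S" by simp
  show ?thesis
  proof (cases "r \<in> a i")
    case True
    have "{j\<in>{..<n}. r \<in> a j} = insert i ?S" using True assms by auto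
    then show ?thesis using True fin unfolding load_def by simp
  next
    case False
    have "{j\<in>{..<n}. r \<in> a j} = ?S" using False by auto
    then show ?thesis using False unfolding load_def by simp
  qed
qed

lemma load_upd:
  assumes "i < n"
  shows "load n (a(i := b)) r = card {j\<in>{..<n}. j \<noteq> i \<and> r \<in> a j} + (if r \<in> b then 1 else 0)"
proof -
  have "{j\<in>{..<n}. j \<noteq> i \<and> r \<in> (a(i := b)) j} = {j\<in>{..<n}. j \<noteq> i \<and> r \<in> a j}" by auto
  then show ?thesis using load_split[OF assms, of "a(i := b)" r] by simp
qed

lemma profiles_finite:
  assumes "valid_game n R A" shows "finite (profiles n A)"
proof -
  have "\<And>i. i \<in> {..<n} \<Longrightarrow> finite (A i)"
    using assms unfolding valid_game_def by (meson finite_Pow_iff finite_subset lessThan_iff)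
  then show ?thesis unfolding profiles_def by (intro finite_PiE) auto
qed

lemma profiles_nonempty:
  assumes "valid_game n R A" shows "profiles n A \<noteq> {}"
  using assms unfolding valid_game_def profiles_def PiE_eq_empty_iff by auto

lemma profile_sub:
  assumes "valid_game n R A" "a \<in> profiles n A" "i < n" shows "a i \<subseteq> R"
  using assms unfolding valid_game_def profiles_def by (auto dest!: PiE_mem)

lemma profile_upd:
  assumes "a \<in> profiles n A" "i < n" "b \<in> A i" shows "a(i := b) \<in> profiles n A"
  using assms PiE_fun_upd[of b A i a "{..<n}"] unfolding profiles_def
  by (simp add: insert_absorb)

lemma sum_if_card:
  fixes c :: real and m :: nat
  shows "(\<Sum>i<m. if P i then c else 0) = real (card {i\<in>{..<m}. P i}) * c"
proof (induction m)
  case 0 then show ?case by simp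
next
  case (Suc m)
  have "{i\<in>{..<Suc m}. P i} = (if P m then insert m {i\<in>{..<m}. P i} else {i\<in>{..<m}. P i})"
    by (auto simp: less_Suc_eq)
  then show ?case using Suc by (simp add: algebra_simps)
qed

lemma sum_swap_card:
  fixes h :: "nat \<Rightarrow> real" and n :: nat
  assumes "finite R" "\<And>i. i < n \<Longrightarrow> S i \<subseteq> R"
  shows "(\<Sum>i<n. \<Sum>r\<in>S i. h r) = (\<Sum>r\<in>R. real (card {i\<in>{..<n}. r \<in> S i}) * h r)"
proof -
  have "(\<Sum>i<n. \<Sum>r\<in>S i. h r) = (\<Sum>i<n. \<Sum>r\<in>R. if r \<in> S i then h r else 0)"
  proof (rule sum.cong[OF refl])
    fix i assume "i \<in> {..<n}"
    then have "S i \<subseteq> R" using assms by simp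
    then show "(\<Sum>r\<in>S i. h r) = (\<Sum>r\<in>R. if r \<in> S i then h r else 0)"
      using assms(1) by (simp add: sum.If_cases Int_absorb1)
  qed
  also have "\<dots> = (\<Sum>r\<in>R. \<Sum>i<n. if r \<in> S i then h r else 0)" by (rule sum.swap)
  also have "\<dots> = (\<Sum>r\<in>R. real (card {i\<in>{..<n}. r \<in> S i}) * h r)"
  proof (rule sum.cong[OF refl])
    fix r
    have "(\<Sum>i<n. if r \<in> S i then h r else 0) = real (card {i\<in>{..<n}. r \<in> S i}) * h r"
      using sum_if_card[of "\<lambda>i. r \<in> S i" "h r" n] by simp
    then show "(\<Sum>i<n. if r \<in> S i then h r else 0) = real (card {i\<in>{..<n}. r \<in> S i}) * h r" by simp
  qed
  finally show ?thesis .
qed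

lemma welfare_R:
  assumes "valid_game n R A" "a \<in> profiles n A" "W 0 = 0"
  shows "welfare W n a = (\<Sum>r\<in>R. W (load n a r))"
proof -
  have sub: "(\<Union>i<n. a i) \<subseteq> R" using profile_sub[OF assms(1,2)] by auto
  have fin: "finite R" using assms(1) unfolding valid_game_def by simp
  have "\<forall>r\<in>R - (\<Union>i<n. a i). W (load n a r) = 0"
  proof
    fix r assume "r \<in> R - (\<Union>i<n. a i)"
    then have e: "{i\<in>{..<n}. r \<in> a i} = {}" by auto
    have "load n a r = 0" unfolding load_def e by simp
    then show "W (load n a r) = 0" using assms(3) by simp
  qed
  then show ?thesis unfolding welfare_def using sum.mono_neutral_left[OF fin sub] by simp
qed

definition Pot :: "(nat \<Rightarrow> real) \<Rightarrow> nat \<Rightarrow> real" where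
  "Pot F m = (\<Sum>k<m. F (Suc k))"

lemma utility_diff:
  assumes "valid_game n R A" "a \<in> profiles n A" "i < n" "b \<in> A i"
  shows "utility F n (a(i := b)) i - utility F n a i =
         (\<Sum>r\<in>R. Pot F (load n (a(i := b)) r)) - (\<Sum>r\<in>R. Pot F (load n a r))"
proof -
  define c where "c r = card {j\<in>{..<n}. j \<noteq> i \<and> r \<in> a j}" for r
  have fin: "finite R" using assms(1) unfolding valid_game_def by simp
  have bR: "b \<subseteq> R" using assms(1,3,4) unfolding valid_game_def by auto
  have aR: "a i \<subseteq> R" using profile_sub[OF assms(1,2,3)] .
  have l1: "load n a r = c r + (if r \<in> a i then 1 else 0)" for r using load_split[OF assms(3)] c_def by simp
  have l2: "load n (a(i := b)) r = c r + (if r \<in> b then 1 else 0)" for r using load_upd[OF assms(3)] c_def by simp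
  have u1: "utility F n (a(i := b)) i = (\<Sum>r\<in>R. if r \<in> b then F (Suc (c r)) else 0)"
  proof -
    have "utility F n (a(i := b)) i = (\<Sum>r\<in>b. F (Suc (c r)))" unfolding utility_def using l2 by simp
    also have "\<dots> = (\<Sum>r\<in>R. if r \<in> b then F (Suc (c r)) else 0)"
      using fin bR by (simp add: sum.If_cases Int_absorb1)
    finally show ?thesis .
  qed
  have u2: "utility F n a i = (\<Sum>r\<in>R. if r \<in> a i then F (Suc (c r)) else 0)"
  proof -
    have "utility F n a i = (\<Sum>r\<in>a i. F (Suc (c r)))" unfolding utility_def using l1 by simp
    also have "\<dots> = (\<Sum>r\<in>R. if r \<in> a i then F (Suc (c r)) else 0)"
      using fin aR by (simp add: sum.If_cases Int_absorb1)
    finally show ?thesis .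
  qed
  have p: "Pot F (load n (a(i := b)) r) - Pot F (load n a r) =
      (if r \<in> b then F (Suc (c r)) else 0) - (if r \<in> a i then F (Suc (c r)) else 0)" for r
    unfolding l1 l2 Pot_def by simp
  show ?thesis unfolding u1 u2 sum_subtractf[symmetric] using p by simp
qed

lemma NE_exists:
  assumes "valid_game n R A"
  shows "\<exists>a. is_NE F n A a"
proof -
  define \<Phi> where "\<Phi> a = (\<Sum>r\<in>R. Pot F (load n a r))" for a
  have fin: "finite (\<Phi> ` profiles n A)" using profiles_finite[OF assms] by simp
  have ne: "\<Phi> ` profiles n A \<noteq> {}" using profiles_nonempty[OF assms] by simp
  obtain a where a: "a \<in> profiles n A" "\<Phi> a = Max (\<Phi> ` profiles n A)"
    using Max_in[OF fin ne] by auto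
  have "is_NE F n A a"
    unfolding is_NE_def
  proof (intro conjI allI impI ballI)
    show "a \<in> profiles n A" by (rule a(1))
    fix i b assume i: "i < n" and b: "b \<in> A i"
    have "\<Phi> (a(i := b)) \<le> \<Phi> a" unfolding a(2) using fin profile_upd[OF a(1) i b] by simp
    then show "utility F n (a(i := b)) i \<le> utility F n a i"
      using utility_diff[OF assms a(1) i b, of F] unfolding \<Phi>_def by simp
  qed
  then show ?thesis by blast
qed


lemma card_split2:
  fixes n :: nat
  shows "card {i\<in>{..<n}. P i} = card {i\<in>{..<n}. P i \<and> Q i} + card {i\<in>{..<n}. P i \<and> \<not> Q i}"
proof -
  have "{i\<in>{..<n}. P i} = {i\<in>{..<n}. P i \<and> Q i} \<union> {i\<in>{..<n}. P i \<and> \<not> Q i}" by auto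
  moreover have "{i\<in>{..<n}. P i \<and> Q i} \<inter> {i\<in>{..<n}. P i \<and> \<not> Q i} = {}" by auto
  ultimately show ?thesis by (simp add: card_Un_disjoint)
qed

lemma smooth:
  fixes F V :: "nat \<Rightarrow> real" and \<rho> :: real
  assumes G: "valid_game n R A" and NE: "is_NE F n A a" and ob: "ob \<in> profiles n A"
    and V0: "V 0 = 0"
    and H: "\<And>x y z. V (y + z) \<le> \<rho> * V (x + z) - real x * F (x + z) + real y * F (Suc (x + z))"
  shows "welfare V n ob \<le> \<rho> * welfare V n a"
proof -
  have a: "a \<in> profiles n A" using NE unfolding is_NE_def by simp
  have fin: "finite R" using G unfolding valid_game_def by simp
  define l where "l r = load n a r" for r
  define x where "x r = card {i\<in>{..<n}. r \<in> a i \<and> r \<notin> ob i}" for r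
  define y where "y r = card {i\<in>{..<n}. r \<in> ob i \<and> r \<notin> a i}" for r
  define z where "z r = card {i\<in>{..<n}. r \<in> ob i \<and> r \<in> a i}" for r
  have lxz: "l r = x r + z r" for r
    unfolding l_def x_def z_def load_def using card_split2[where P="\<lambda>i. r \<in> a i" and Q="\<lambda>i. r \<notin> ob i" and n=n]
    by (simp add: conj_commute)
  have oyz: "load n ob r = y r + z r" for r
    unfolding y_def z_def load_def using card_split2[where P="\<lambda>i. r \<in> ob i" and Q="\<lambda>i. r \<notin> a i" and n=n]
    by (simp add: add.commute)
  have aR: "\<And>i. i < n \<Longrightarrow> a i \<subseteq> R" using profile_sub[OF G a] .
  have oR: "\<And>i. i < n \<Longrightarrow> ob i \<subseteq> R" using profile_sub[OF G ob] .
  have S1: "(\<Sum>i<n. utility F n a i) = (\<Sum>r\<in>R. real (l r) * F (l r))"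
    unfolding utility_def l_def load_def using sum_swap_card[OF fin aR, where h="\<lambda>r. F (load n a r)"]
    unfolding load_def by simp
  have dev: "utility F n (a(i := ob i)) i =
       (\<Sum>r\<in>ob i \<inter> a i. F (l r)) + (\<Sum>r\<in>ob i - a i. F (Suc (l r)))" if i: "i < n" for i
  proof -
    have "utility F n (a(i := ob i)) i = (\<Sum>r\<in>ob i. if r \<in> a i then F (l r) else F (Suc (l r)))"
      unfolding utility_def fun_upd_same
    proof (rule sum.cong[OF refl])
      fix r assume r: "r \<in> ob i"
      show "F (load n (a(i := ob i)) r) = (if r \<in> a i then F (l r) else F (Suc (l r)))"
        unfolding l_def load_upd[OF i] load_split[OF i, of a r] using r by simp
    qed
    also have "\<dots> = (\<Sum>r\<in>ob i \<inter> a i. F (l r)) + (\<Sum>r\<in>ob i - a i. F (Suc (l r)))"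
    proof -
      have fo: "finite (ob i)" using oR[OF i] fin finite_subset by blast
      have e1: "ob i \<inter> {r. r \<in> a i} = ob i \<inter> a i" by auto
      have e2: "ob i \<inter> - {r. r \<in> a i} = ob i - a i" by auto
      show ?thesis unfolding sum.If_cases[OF fo] e1 e2 ..
    qed
    finally show ?thesis .
  qed
  have S2: "(\<Sum>i<n. utility F n (a(i := ob i)) i) =
      (\<Sum>r\<in>R. real (z r) * F (l r)) + (\<Sum>r\<in>R. real (y r) * F (Suc (l r)))"
  proof -
    have "(\<Sum>i<n. utility F n (a(i := ob i)) i) =
        (\<Sum>i<n. \<Sum>r\<in>ob i \<inter> a i. F (l r)) + (\<Sum>i<n. \<Sum>r\<in>ob i - a i. F (Suc (l r)))"
      using dev by (simp add: sum.distrib)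
    also have "(\<Sum>i<n. \<Sum>r\<in>ob i \<inter> a i. F (l r)) = (\<Sum>r\<in>R. real (z r) * F (l r))"
      using sum_swap_card[OF fin, where n=n and S="\<lambda>i. ob i \<inter> a i" and h="\<lambda>r. F (l r)"] oR unfolding z_def by auto
    also have "(\<Sum>i<n. \<Sum>r\<in>ob i - a i. F (Suc (l r))) = (\<Sum>r\<in>R. real (y r) * F (Suc (l r)))"
      using sum_swap_card[OF fin, where n=n and S="\<lambda>i. ob i - a i" and h="\<lambda>r. F (Suc (l r))"] oR unfolding y_def by auto
    finally show ?thesis .
  qed
  have ne: "(\<Sum>i<n. utility F n (a(i := ob i)) i) \<le> (\<Sum>i<n. utility F n a i)"
  proof (rule sum_mono)
    fix i assume "i \<in> {..<n}"
    then have i: "i < n" by simp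
    have "ob i \<in> A i" using ob i unfolding profiles_def by auto
    then show "utility F n (a(i := ob i)) i \<le> utility F n a i" using NE i unfolding is_NE_def by simp
  qed
  have per: "V (load n ob r) \<le> \<rho> * V (l r) - (real (l r) * F (l r) - (real (z r) * F (l r) + real (y r) * F (Suc (l r))))" for r
  proof -
    have "V (load n ob r) \<le> \<rho> * V (x r + z r) - real (x r) * F (x r + z r) + real (y r) * F (Suc (x r + z r))"
      unfolding oyz by (rule H)
    moreover have "real (x r) = real (l r) - real (z r)" using lxz by simp
    ultimately show ?thesis unfolding lxz[symmetric] by (simp add: algebra_simps)
  qed
  have "welfare V n ob = (\<Sum>r\<in>R. V (load n ob r))" using welfare_R[where W=V, OF G ob V0] .
  also have "\<dots> \<le> (\<Sum>r\<in>R. \<rho> * V (l r) - (real (l r) * F (l r) - (real (z r) * F (l r) + real (y r) * F (Suc (l r)))))"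
    using per by (rule sum_mono)
  also have "\<dots> = \<rho> * (\<Sum>r\<in>R. V (l r)) - ((\<Sum>r\<in>R. real (l r) * F (l r)) - ((\<Sum>r\<in>R. real (z r) * F (l r)) + (\<Sum>r\<in>R. real (y r) * F (Suc (l r)))))"
    by (simp add: sum_subtractf sum.distrib sum_distrib_left)
  also have "\<dots> \<le> \<rho> * (\<Sum>r\<in>R. V (l r))" using ne S1 S2 by simp
  also have "(\<Sum>r\<in>R. V (l r)) = welfare V n a" unfolding l_def using welfare_R[where W=V, OF G a V0] by simp
  finally show ?thesis .
qed


definition dd :: "nat \<Rightarrow> nat \<Rightarrow> nat \<Rightarrow> nat" where
  "dd n i k = (if i + k < n then i + k else i + k - n)"

lemma bij_from_inj:
  assumes "inj_on f {..<n}" "\<And>i. i < n \<Longrightarrow> f i < (n::nat)"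
  shows "bij_betw f {..<n} {..<n}"
proof -
  have sub: "f ` {..<n} \<subseteq> {..<n}" using assms(2) by auto
  have "card (f ` {..<n}) = card {..<n}" using card_image[OF assms(1)] by simp
  then have "f ` {..<n} = {..<n}" using sub by (intro card_subset_eq) auto
  then show ?thesis using assms(1) unfolding bij_betw_def by simp
qed

lemma dd_bij1: "k < n \<Longrightarrow> bij_betw (\<lambda>i. dd n i k) {..<n} {..<n}"
  by (rule bij_from_inj) (auto simp: inj_on_def dd_def split: if_splits)

lemma dd_bij2: "i < n \<Longrightarrow> bij_betw (\<lambda>k. dd n i k) {..<n} {..<n}"
  by (rule bij_from_inj) (auto simp: inj_on_def dd_def split: if_splits)

lemma card_bij_pred:
  assumes "bij_betw f {..<n} {..<(n::nat)}"
  shows "card {i\<in>{..<n}. P (f i)} = card {j\<in>{..<n}. P j}"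
proof -
  have inj: "inj_on f {i\<in>{..<n}. P (f i)}"
    using assms unfolding bij_betw_def by (rule inj_on_subset[OF conjunct1]) auto
  have "f ` {i\<in>{..<n}. P (f i)} = {j\<in>{..<n}. P j}"
  proof
    show "f ` {i\<in>{..<n}. P (f i)} \<subseteq> {j\<in>{..<n}. P j}" using assms unfolding bij_betw_def by auto
    show "{j\<in>{..<n}. P j} \<subseteq> f ` {i\<in>{..<n}. P (f i)}"
    proof
      fix j assume j: "j \<in> {j\<in>{..<n}. P j}"
      then have "j \<in> f ` {..<n}" using assms unfolding bij_betw_def by simp
      then obtain i where "i < n" "j = f i" by auto
      then show "j \<in> f ` {i\<in>{..<n}. P (f i)}" using j by auto
    qed
  qed
  then show ?thesis using card_image[OF inj] by simp
qed

lemma card_interval: "hi \<le> n \<Longrightarrow> card {j\<in>{..<n}. lo \<le> j \<and> j < hi} = hi - (lo::nat)"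
proof -
  assume "hi \<le> n"
  then have "{j\<in>{..<n}. lo \<le> j \<and> j < hi} = {lo..<hi}" by auto
  then show ?thesis by simp
qed

definition Eset :: "nat \<Rightarrow> nat set \<Rightarrow> (nat \<Rightarrow> nat) \<Rightarrow> nat \<Rightarrow> nat set" where
  "Eset n T X i = prod_encode ` (SIGMA t:T. {k\<in>{..<n}. dd n i k < X t})"

definition Oset :: "nat \<Rightarrow> nat set \<Rightarrow> (nat \<Rightarrow> nat) \<Rightarrow> (nat \<Rightarrow> nat) \<Rightarrow> nat \<Rightarrow> nat set" where
  "Oset n T X Y i = prod_encode ` (SIGMA t:T. {k\<in>{..<n}. X t \<le> dd n i k \<and> dd n i k < X t + Y t})"

definition Rset :: "nat \<Rightarrow> nat set \<Rightarrow> nat set" where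
  "Rset n T = prod_encode ` (T \<times> {..<n})"

lemma enc_inj: "inj_on prod_encode S"
  by (rule inj_prod_encode)

lemma mem_E: "prod_encode (t, k) \<in> Eset n T X i \<longleftrightarrow> t \<in> T \<and> k < n \<and> dd n i k < X t"
  unfolding Eset_def by auto

lemma mem_O: "prod_encode (t, k) \<in> Oset n T X Y i \<longleftrightarrow> t \<in> T \<and> k < n \<and> X t \<le> dd n i k \<and> dd n i k < X t + Y t"
  unfolding Oset_def by auto

lemma sum_enc:
  fixes g :: "nat \<Rightarrow> real"
  assumes "finite T" "\<And>t. finite (S t)"
  shows "(\<Sum>r\<in>prod_encode ` (SIGMA t:T. S t). g r) = (\<Sum>t\<in>T. \<Sum>k\<in>S t. g (prod_encode (t, k)))"
proof -
  have "(\<Sum>r\<in>prod_encode ` (SIGMA t:T. S t). g r) = (\<Sum>p\<in>(SIGMA t:T. S t). g (prod_encode p))"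
    by (rule sum.reindex[OF enc_inj, unfolded comp_def])
  also have "\<dots> = (\<Sum>t\<in>T. \<Sum>k\<in>S t. g (prod_encode (t, k)))"
    using sum.Sigma[of T S "\<lambda>t k. g (prod_encode (t, k))"] assms by (simp add: split_def)
  finally show ?thesis .
qed


context
  fixes n :: nat and T :: "nat set" and X Y :: "nat \<Rightarrow> nat"
  assumes finT: "finite T" and npos: "0 < n" and XY: "\<And>t. t \<in> T \<Longrightarrow> X t + Y t \<le> n"
begin

abbreviation "Eg \<equiv> Eset n T X"
abbreviation "Og \<equiv> Oset n T X Y"
abbreviation "Rg \<equiv> Rset n T"
definition "AA i = {Eg i, Og i}"
definition "ep = restrict Eg {..<n}"
definition "op' = restrict Og {..<n}"

lemma valid: "valid_game n Rg AA"
proof -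
  have "finite Rg" unfolding Rset_def using finT by simp
  moreover have "Eg i \<subseteq> Rg" for i unfolding Eset_def Rset_def by auto
  moreover have "Og i \<subseteq> Rg" for i unfolding Oset_def Rset_def by auto
  ultimately show ?thesis unfolding valid_game_def AA_def by auto
qed

lemma ep_prof: "ep \<in> profiles n AA"
  unfolding ep_def profiles_def AA_def by (auto simp: restrict_PiE_iff)

lemma op_prof: "op' \<in> profiles n AA"
  unfolding op'_def profiles_def AA_def by (auto simp: restrict_PiE_iff)

lemma load_ep: assumes "t \<in> T" "k < n" shows "load n ep (prod_encode (t, k)) = X t"
proof -
  have "{i\<in>{..<n}. prod_encode (t, k) \<in> ep i} = {i\<in>{..<n}. dd n i k < X t}"
    unfolding ep_def using assms by (auto simp: mem_E)
  moreover have "card {i\<in>{..<n}. dd n i k < X t} = card {j\<in>{..<n}. j < X t}"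
    using card_bij_pred[OF dd_bij1[OF assms(2)], where P = "\<lambda>j. j < X t"] .
  moreover have "card {j\<in>{..<n}. j < X t} = X t"
    using card_interval[of "X t" n 0] XY[OF assms(1)] by simp
  ultimately show ?thesis unfolding load_def by simp
qed

lemma load_op: assumes "t \<in> T" "k < n" shows "load n op' (prod_encode (t, k)) = Y t"
proof -
  have "{i\<in>{..<n}. prod_encode (t, k) \<in> op' i} = {i\<in>{..<n}. X t \<le> dd n i k \<and> dd n i k < X t + Y t}"
    unfolding op'_def using assms by (auto simp: mem_O)
  moreover have "card {i\<in>{..<n}. X t \<le> dd n i k \<and> dd n i k < X t + Y t} = card {j\<in>{..<n}. X t \<le> j \<and> j < X t + Y t}"
    using card_bij_pred[OF dd_bij1[OF assms(2)], where P = "\<lambda>j. X t \<le> j \<and> j < X t + Y t"] .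
  moreover have "card {j\<in>{..<n}. X t \<le> j \<and> j < X t + Y t} = Y t"
    using card_interval[of "X t + Y t" n "X t"] XY[OF assms(1)] by simp
  ultimately show ?thesis unfolding load_def by simp
qed

lemma load_dev:
  assumes i: "i < n" and t: "t \<in> T" and k: "k < n" and d: "X t \<le> dd n i k" and d2: "dd n i k < X t + Y t"
  shows "load n (ep(i := Og i)) (prod_encode (t, k)) = Suc (X t)"
proof -
  have "prod_encode (t, k) \<notin> ep i" unfolding ep_def using i d by (simp add: mem_E)
  then show ?thesis using load_upd[OF i, of ep "Og i"] load_split[OF i, of ep] load_ep[OF t k]
    using i t k d d2 by (simp add: mem_O)
qed

lemma util_ep: assumes i: "i < n" shows "utility F n ep i = (\<Sum>t\<in>T. real (X t) * F (X t))"
proof -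
  have "utility F n ep i = (\<Sum>r\<in>Eg i. F (load n ep r))" unfolding utility_def ep_def using i by simp
  also have "\<dots> = (\<Sum>t\<in>T. \<Sum>k\<in>{k\<in>{..<n}. dd n i k < X t}. F (load n ep (prod_encode (t, k))))"
    unfolding Eset_def by (rule sum_enc[OF finT]) simp
  also have "\<dots> = (\<Sum>t\<in>T. \<Sum>k\<in>{k\<in>{..<n}. dd n i k < X t}. F (X t))"
    using load_ep by (intro sum.cong refl) auto
  also have "\<dots> = (\<Sum>t\<in>T. real (X t) * F (X t))"
  proof (rule sum.cong[OF refl])
    fix t assume t: "t \<in> T"
    have "card {k\<in>{..<n}. dd n i k < X t} = card {j\<in>{..<n}. j < X t}"
      using card_bij_pred[OF dd_bij2[OF i], where P = "\<lambda>j. j < X t"] .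
    also have "\<dots> = X t" using card_interval[of "X t" n 0] XY[OF t] by simp
    finally show "(\<Sum>k\<in>{k\<in>{..<n}. dd n i k < X t}. F (X t)) = real (X t) * F (X t)" by simp
  qed
  finally show ?thesis .
qed

lemma util_dev: assumes i: "i < n" shows "utility F n (ep(i := Og i)) i = (\<Sum>t\<in>T. real (Y t) * F (Suc (X t)))"
proof -
  have "utility F n (ep(i := Og i)) i = (\<Sum>r\<in>Og i. F (load n (ep(i := Og i)) r))" unfolding utility_def by simp
  also have "\<dots> = (\<Sum>t\<in>T. \<Sum>k\<in>{k\<in>{..<n}. X t \<le> dd n i k \<and> dd n i k < X t + Y t}. F (load n (ep(i := Og i)) (prod_encode (t, k))))"
    unfolding Oset_def by (rule sum_enc[OF finT]) simp
  also have "\<dots> = (\<Sum>t\<in>T. \<Sum>k\<in>{k\<in>{..<n}. X t \<le> dd n i k \<and> dd n i k < X t + Y t}. F (Suc (X t)))"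
    using load_dev[OF i] by (intro sum.cong refl) auto
  also have "\<dots> = (\<Sum>t\<in>T. real (Y t) * F (Suc (X t)))"
  proof (rule sum.cong[OF refl])
    fix t assume t: "t \<in> T"
    have "card {k\<in>{..<n}. X t \<le> dd n i k \<and> dd n i k < X t + Y t} = card {j\<in>{..<n}. X t \<le> j \<and> j < X t + Y t}"
      using card_bij_pred[OF dd_bij2[OF i], where P = "\<lambda>j. X t \<le> j \<and> j < X t + Y t"] .
    also have "\<dots> = Y t" using card_interval[of "X t + Y t" n "X t"] XY[OF t] by simp
    finally show "(\<Sum>k\<in>{k\<in>{..<n}. X t \<le> dd n i k \<and> dd n i k < X t + Y t}. F (Suc (X t))) = real (Y t) * F (Suc (X t))" by simp
  qed
  finally show ?thesis .
qed

lemma ep_NE: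
  assumes "(\<Sum>t\<in>T. real (Y t) * F (Suc (X t))) \<le> (\<Sum>t\<in>T. real (X t) * F (X t))"
  shows "is_NE F n AA ep"
  unfolding is_NE_def
proof (intro conjI allI impI ballI)
  show "ep \<in> profiles n AA" by (rule ep_prof)
  fix i b assume i: "i < n" and b: "b \<in> AA i"
  show "utility F n (ep(i := b)) i \<le> utility F n ep i"
  proof (cases "b = Eg i")
    case True
    have "ep(i := b) = ep" unfolding True ep_def using i by (auto simp: fun_eq_iff)
    then show ?thesis by simp
  next
    case False
    then have "b = Og i" using b unfolding AA_def by auto
    then show ?thesis using util_ep[OF i] util_dev[OF i] assms by simp
  qed
qed

lemma welf_ep: assumes "V 0 = 0" shows "welfare V n ep = real n * (\<Sum>t\<in>T. V (X t))"
proof -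
  have "welfare V n ep = (\<Sum>r\<in>Rg. V (load n ep r))" by (rule welfare_R[where W=V, OF valid ep_prof assms])
  also have "\<dots> = (\<Sum>t\<in>T. \<Sum>k\<in>{..<n}. V (load n ep (prod_encode (t, k))))"
    unfolding Rset_def by (rule sum_enc[OF finT]) simp
  also have "\<dots> = (\<Sum>t\<in>T. \<Sum>k\<in>{..<n}. V (X t))" using load_ep by (intro sum.cong refl) auto
  finally show ?thesis by (simp add: sum_distrib_left)
qed

lemma welf_op: assumes "V 0 = 0" shows "welfare V n op' = real n * (\<Sum>t\<in>T. V (Y t))"
proof -
  have "welfare V n op' = (\<Sum>r\<in>Rg. V (load n op' r))" by (rule welfare_R[where W=V, OF valid op_prof assms])
  also have "\<dots> = (\<Sum>t\<in>T. \<Sum>k\<in>{..<n}. V (load n op' (prod_encode (t, k))))"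
    unfolding Rset_def by (rule sum_enc[OF finT]) simp
  also have "\<dots> = (\<Sum>t\<in>T. \<Sum>k\<in>{..<n}. V (Y t))" using load_op by (intro sum.cong refl) auto
  finally show ?thesis by (simp add: sum_distrib_left)
qed

end

lemma welfare_nonneg: "(\<And>m. 0 \<le> V m) \<Longrightarrow> 0 \<le> welfare V n a"
  unfolding welfare_def by (intro sum_nonneg) auto

lemma poa_nonneg:
  assumes G: "valid_game n R A" and V: "\<And>m. 0 \<le> V m"
  shows "0 \<le> poa V F n A"
proof (cases "opt_welfare V n A = 0")
  case True then show ?thesis unfolding poa_def by simp
next
  case False
  have "opt_welfare V n A \<in> welfare V n ` profiles n A"
    unfolding opt_welfare_def using profiles_finite[OF G] profiles_nonempty[OF G] by (intro Max_in) auto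
  then have "0 \<le> opt_welfare V n A" using welfare_nonneg[OF V] by auto
  obtain a where "is_NE F n A a" using NE_exists[OF G] by blast
  then have ne: "(\<lambda>a. welfare V n a / opt_welfare V n A) ` {a. is_NE F n A a} \<noteq> {}" by auto
  have "0 \<le> Inf ((\<lambda>a. welfare V n a / opt_welfare V n A) ` {a. is_NE F n A a})"
    using \<open>0 \<le> opt_welfare V n A\<close> welfare_nonneg[OF V] by (intro cInf_greatest[OF ne]) auto
  then show ?thesis unfolding poa_def using False by simp
qed

lemma poa_le_profile:
  assumes G: "valid_game n R A" and V: "\<And>m. 0 \<le> V m"
    and NE: "is_NE F n A a" and o: "ob \<in> profiles n A" and pos: "0 < welfare V n ob"
  shows "poa V F n A \<le> welfare V n a / welfare V n ob"
proof -
  have opt_ge: "welfare V n ob \<le> opt_welfare V n A"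
    unfolding opt_welfare_def using profiles_finite[OF G] o by (intro Max_ge) auto
  then have optpos: "0 < opt_welfare V n A" using pos by simp
  have bdd: "bdd_below ((\<lambda>a. welfare V n a / opt_welfare V n A) ` {a. is_NE F n A a})"
    using optpos welfare_nonneg[OF V] by (intro bdd_belowI[of _ 0]) auto
  have "poa V F n A = Inf ((\<lambda>a. welfare V n a / opt_welfare V n A) ` {a. is_NE F n A a})"
    unfolding poa_def using optpos by simp
  also have "\<dots> \<le> welfare V n a / opt_welfare V n A" using NE by (intro cInf_lower[OF _ bdd]) auto
  also have "\<dots> \<le> welfare V n a / welfare V n ob"
    using pos opt_ge welfare_nonneg[OF V] by (intro divide_left_mono) auto
  finally show ?thesis .
qed

lemma ring_game:
  fixes F V :: "nat \<Rightarrow> real" and T :: "nat set" and X Y :: "nat \<Rightarrow> nat" and n :: nat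
  assumes finT: "finite T" and npos: "0 < n" and XY: "\<And>t. t \<in> T \<Longrightarrow> X t + Y t \<le> n"
    and NEc: "(\<Sum>t\<in>T. real (Y t) * F (Suc (X t))) \<le> (\<Sum>t\<in>T. real (X t) * F (X t))"
    and V0: "V 0 = 0" and V: "\<And>m. 0 \<le> V m" and pos: "0 < (\<Sum>t\<in>T. V (Y t))"
  shows "\<exists>R A. valid_game n R A \<and> poa V F n A \<le> (\<Sum>t\<in>T. V (X t)) / (\<Sum>t\<in>T. V (Y t))"
proof (intro exI conjI)
  note v = valid[OF finT npos XY]
  show "valid_game n (Rset n T) (AA n T X Y)" by (rule v)
  have we: "welfare V n (ep n T X) = real n * (\<Sum>t\<in>T. V (X t))" by (rule welf_ep[where V=V and Y=Y, OF finT npos XY V0])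
  have wo: "welfare V n (op' n T X Y) = real n * (\<Sum>t\<in>T. V (Y t))" by (rule welf_op[where V=V, OF finT npos XY V0])
  have "poa V F n (AA n T X Y) \<le> welfare V n (ep n T X) / welfare V n (op' n T X Y)"
  proof (rule poa_le_profile[OF v V])
    show "is_NE F n (AA n T X Y) (ep n T X)" by (rule ep_NE[OF finT npos XY NEc])
    show "op' n T X Y \<in> profiles n (AA n T X Y)" by (rule op_prof[OF finT npos XY])
    show "0 < welfare V n (op' n T X Y)" unfolding wo using npos pos by simp
  qed
  also have "\<dots> = (\<Sum>t\<in>T. V (X t)) / (\<Sum>t\<in>T. V (Y t))" unfolding we wo using npos by simp
  finally show "poa V F n (AA n T X Y) \<le> (\<Sum>t\<in>T. V (X t)) / (\<Sum>t\<in>T. V (Y t))" .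
qed


lemma sum_ee_id: "(\<Sum>a\<le>K. ee b a * real a) = real b * (\<Sum>a<K. ee b a)"
proof (induction K)
  case 0 then show ?case by simp
next
  case (Suc K)
  have "ee b (Suc K) * real (Suc K) = real b * ee b K" by (simp add: ee_Suc)
  then show ?case using Suc by (simp add: algebra_simps)
qed

context
  fixes \<alpha> :: real and \<beta> :: nat
  assumes a0: "0 \<le> \<alpha>" and a1: "\<alpha> \<le> 1" and b1: "1 \<le> \<beta>"
begin

lemma num_id: "\<beta> \<le> N \<Longrightarrow> (\<Sum>a\<le>N. ee \<beta> a * Vab \<alpha> \<beta> a) =
   real \<beta> * (\<Sum>a<N. ee \<beta> a) - \<alpha> * real \<beta> * (ee \<beta> \<beta> - ee \<beta> N)"
proof (induction N rule: dec_induct)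
  case base
  have "(\<Sum>a\<le>\<beta>. ee \<beta> a * Vab \<alpha> \<beta> a) = (\<Sum>a\<le>\<beta>. ee \<beta> a * real a)"
    by (intro sum.cong refl) (simp add: Vab_small)
  then show ?case using sum_ee_id by simp
next
  case (step N)
  have V: "Vab \<alpha> \<beta> (Suc N) = (1 - \<alpha>) * real (Suc N) + \<alpha> * real \<beta>" using step by (intro Vab_large) auto
  have e: "ee \<beta> (Suc N) * real (Suc N) = real \<beta> * ee \<beta> N" by (simp add: ee_Suc)
  have "(\<Sum>a\<le>Suc N. ee \<beta> a * Vab \<alpha> \<beta> a) = (\<Sum>a\<le>N. ee \<beta> a * Vab \<alpha> \<beta> a) + ee \<beta> (Suc N) * Vab \<alpha> \<beta> (Suc N)"
    by simp
  also have "ee \<beta> (Suc N) * Vab \<alpha> \<beta> (Suc N) = (1 - \<alpha>) * (ee \<beta> (Suc N) * real (Suc N)) + \<alpha> * real \<beta> * ee \<beta> (Suc N)"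
    unfolding V by (simp only: algebra_simps)
  also have "\<dots> = (1 - \<alpha>) * (real \<beta> * ee \<beta> N) + \<alpha> * real \<beta> * ee \<beta> (Suc N)"
    unfolding e ..
  finally show ?case using step by (simp add: algebra_simps)
qed

definition mm :: "nat \<Rightarrow> nat \<Rightarrow> nat" where
  "mm N a = (if a = 0 then \<beta> * fact N else (fact N div fact a) * \<beta> ^ a)"

definition Ya :: "nat \<Rightarrow> nat \<Rightarrow> nat" where
  "Ya N a = (if a = 0 then 1 else if a < N then \<beta> else 0)"

lemma mm_real: "1 \<le> a \<Longrightarrow> a \<le> N \<Longrightarrow> real (mm N a) = fact N * ee \<beta> a"
proof -
  assume "1 \<le> a" "a \<le> N"
  then have "real (fact N div fact a) = fact N / fact a"
    by (simp add: real_of_nat_div fact_dvd)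
  then show ?thesis using \<open>1 \<le> a\<close> unfolding mm_def ee_def by simp
qed

lemma mm0: "real (mm N 0) = real \<beta> * fact N" unfolding mm_def by simp

lemma instance_bound:
  fixes F :: "nat \<Rightarrow> real" and N :: nat
  assumes N: "\<beta> \<le> N"
  shows "\<exists>n R A. valid_game n R A \<and> poa (Vab \<alpha> \<beta>) F n A \<le> 1 / rho \<alpha> \<beta> + ee \<beta> N"
proof -
  have N1: "1 \<le> N" using N b1 by simp
  define T where "T = prod_encode ` (SIGMA a:{..N}. {..<mm N a})"
  define X where "X t = fst (prod_decode t)" for t
  define Y where "Y t = Ya N (fst (prod_decode t))" for t
  define M :: real where "M = fact N"
  have M0: "0 < M" unfolding M_def by simp
  have finT: "finite T" unfolding T_def by simp
  have sumT: "(\<Sum>t\<in>T. h (fst (prod_decode t))) = (\<Sum>a\<le>N. real (mm N a) * h a)" for h :: "nat \<Rightarrow> real"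
  proof -
    have "(\<Sum>t\<in>T. h (fst (prod_decode t))) = (\<Sum>a\<le>N. \<Sum>c\<in>{..<mm N a}. h (fst (prod_decode (prod_encode (a, c)))))"
      unfolding T_def by (rule sum_enc) auto
    then show ?thesis by simp
  qed
  define n where "n = N + \<beta>"
  have npos: "0 < n" unfolding n_def using b1 by simp
  have XY: "X t + Y t \<le> n" if "t \<in> T" for t
  proof -
    have "\<exists>a c. t = prod_encode (a, c) \<and> a \<le> N" using that unfolding T_def by auto
    then obtain a c where t: "t = prod_encode (a, c)" "a \<le> N" by blast
    show ?thesis unfolding X_def Y_def Ya_def n_def t using t(2) b1 by auto
  qed
  define L where "L a = real (mm N a) * (real (Ya N a) * F (Suc a))" for a
  define Rt where "Rt a = real (mm N a) * (real a * F a)" for a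
  have LR: "L a = Rt (Suc a)" if "a < N" for a
  proof (cases "a = 0")
    case True
    then show ?thesis unfolding L_def Rt_def Ya_def using mm_real[of 1 N] mm0 N1
      by (simp add: ee_def)
  next
    case False
    have m1: "real (mm N a) = M * ee \<beta> a" using mm_real[of a N] False that unfolding M_def by simp
    have m2: "real (mm N (Suc a)) = M * ee \<beta> (Suc a)" using mm_real[of "Suc a" N] that unfolding M_def by simp
    have e: "ee \<beta> (Suc a) * real (Suc a) = ee \<beta> a * real \<beta>" by (simp add: ee_Suc)
    have Y1: "real (Ya N a) = real \<beta>" unfolding Ya_def using False that by simp
    have "L a = M * (ee \<beta> a * real \<beta>) * F (Suc a)" unfolding L_def Y1 m1 by (simp only: mult_ac)
    also have "\<dots> = M * (ee \<beta> (Suc a) * real (Suc a)) * F (Suc a)" unfolding e ..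
    also have "\<dots> = Rt (Suc a)" unfolding Rt_def m2 by (simp only: mult_ac)
    finally show ?thesis .
  qed
  have LN: "L N = 0" unfolding L_def Ya_def using N1 by simp
  have R0: "Rt 0 = 0" unfolding Rt_def by simp
  obtain N' where N': "N = Suc N'" using N1 by (cases N) auto
  have "(\<Sum>a\<le>N. L a) = (\<Sum>a<N. L a)" using LN by (simp add: N' atMost_Suc lessThan_Suc_atMost[symmetric])
  also have "\<dots> = (\<Sum>a<N. Rt (Suc a))" using LR by (intro sum.cong refl) auto
  also have "\<dots> = (\<Sum>a\<le>N. Rt a)" unfolding N' by (simp only: sum.atMost_Suc_shift lessThan_Suc_atMost R0 add_0)
  finally have LReq: "(\<Sum>a\<le>N. L a) = (\<Sum>a\<le>N. Rt a)" .
  have NEc: "(\<Sum>t\<in>T. real (Y t) * F (Suc (X t))) \<le> (\<Sum>t\<in>T. real (X t) * F (X t))"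
  proof -
    have "(\<Sum>t\<in>T. real (Y t) * F (Suc (X t))) = (\<Sum>a\<le>N. L a)"
      unfolding X_def Y_def L_def using sumT[of "\<lambda>a. real (Ya N a) * F (Suc a)"] by simp
    moreover have "(\<Sum>t\<in>T. real (X t) * F (X t)) = (\<Sum>a\<le>N. Rt a)"
      unfolding X_def Rt_def using sumT[of "\<lambda>a. real a * F a"] by simp
    ultimately show ?thesis using LReq by simp
  qed
  let ?V = "Vab \<alpha> \<beta>"
  define E where "E = (\<Sum>a<N. ee \<beta> a)"
  have num: "(\<Sum>t\<in>T. ?V (X t)) = M * (\<Sum>a\<le>N. ee \<beta> a * ?V a)"
  proof -
    have "(\<Sum>t\<in>T. ?V (X t)) = (\<Sum>a\<le>N. real (mm N a) * ?V a)" unfolding X_def by (rule sumT)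
    also have "\<dots> = (\<Sum>a\<le>N. M * (ee \<beta> a * ?V a))"
    proof (rule sum.cong[OF refl])
      fix a assume "a \<in> {..N}"
      then show "real (mm N a) * ?V a = M * (ee \<beta> a * ?V a)"
        using mm_real[of a N] unfolding M_def by (cases "a = 0") auto
    qed
    finally show ?thesis by (simp add: sum_distrib_left)
  qed
  have den: "(\<Sum>t\<in>T. ?V (Y t)) = M * real \<beta> * E"
  proof -
    have "(\<Sum>t\<in>T. ?V (Y t)) = (\<Sum>a\<le>N. real (mm N a) * ?V (Ya N a))" unfolding Y_def by (rule sumT)
    also have "\<dots> = (\<Sum>a\<le>N. if a < N then M * real \<beta> * ee \<beta> a else 0)"
    proof (rule sum.cong[OF refl])
      fix a assume a: "a \<in> {..N}"
      show "real (mm N a) * ?V (Ya N a) = (if a < N then M * real \<beta> * ee \<beta> a else 0)"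
      proof (cases "a = 0")
        case True
        then show ?thesis using mm0 N1 b1 unfolding Ya_def M_def by (simp add: Vab_def ee_def)
      next
        case False
        then show ?thesis using mm_real[of a N] a unfolding Ya_def M_def by (auto simp: Vab_small)
      qed
    qed
    also have "\<dots> = (\<Sum>a<N. M * real \<beta> * ee \<beta> a)"
      by (simp add: lessThan_Suc_atMost[symmetric])
    finally show ?thesis unfolding E_def by (simp add: sum_distrib_left)
  qed
  have E1: "1 \<le> E"
  proof -
    have "ee \<beta> 0 \<le> E" unfolding E_def using N1 ee_pos[OF b1] by (intro member_le_sum) (auto simp: less_imp_le)
    then show ?thesis by (simp add: ee_def)
  qed
  have Eexp: "E \<le> exp (real \<beta>)" unfolding E_def by (rule ee_partial_le[OF b1])
  have pos: "0 < (\<Sum>t\<in>T. ?V (Y t))" unfolding den using M0 E1 b1 by simp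
  obtain R A where RA: "valid_game n R A" "poa ?V F n A \<le> (\<Sum>t\<in>T. ?V (X t)) / (\<Sum>t\<in>T. ?V (Y t))"
  proof -
    have "\<exists>R A. valid_game n R A \<and> poa ?V F n A \<le> (\<Sum>t\<in>T. ?V (X t)) / (\<Sum>t\<in>T. ?V (Y t))"
      by (rule ring_game[OF finT npos XY NEc _ _ pos]) (simp_all add: Vab_nonneg[OF a0 a1])
    then show ?thesis using that by blast
  qed
  define eb where "eb = ee \<beta> \<beta>"
  define eN where "eN = ee \<beta> N"
  have ratio: "(\<Sum>t\<in>T. ?V (X t)) / (\<Sum>t\<in>T. ?V (Y t)) = 1 - \<alpha> * (eb - eN) / E"
  proof -
    have "(\<Sum>t\<in>T. ?V (X t)) = M * (real \<beta> * E - \<alpha> * real \<beta> * (eb - eN))"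
      unfolding num num_id[OF N] E_def eb_def eN_def ..
    then show ?thesis unfolding den using M0 E1 b1 by (simp add: field_simps)
  qed
  have eNpos: "0 \<le> eN" unfolding eN_def using ee_pos[OF b1] less_imp_le by blast
  have p_le: "pp \<beta> \<le> eb / E"
  proof -
    have "exp (- real \<beta>) \<le> 1 / E"
      using Eexp E1 by (simp add: exp_minus field_simps)
    then have "eb * exp (- real \<beta>) \<le> eb * (1 / E)"
      using ee_pos[OF b1] unfolding eb_def by (intro mult_left_mono) (auto simp: less_imp_le)
    then show ?thesis unfolding pp_def eb_def by simp
  qed
  have "1 - \<alpha> * (eb - eN) / E = 1 - \<alpha> * (eb / E) + \<alpha> * (eN / E)" using E1 by (simp add: field_simps)
  also have "\<dots> \<le> 1 - \<alpha> * pp \<beta> + \<alpha> * (eN / E)"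
  proof -
    have "\<alpha> * pp \<beta> \<le> \<alpha> * (eb / E)" using p_le a0 by (rule mult_left_mono)
    then show ?thesis by linarith
  qed
  also have "\<alpha> * (eN / E) \<le> eN"
  proof -
    have "eN / E \<le> eN / 1" using E1 eNpos by (intro divide_left_mono) auto
    moreover have "0 \<le> eN / E" using eNpos E1 by simp
    ultimately show ?thesis using a0 a1 mult_left_le_one_le[of "eN / E" \<alpha>] by simp
  qed
  finally have "1 - \<alpha> * (eb - eN) / E \<le> 1 - \<alpha> * pp \<beta> + eN" by simp
  moreover have "1 / rho \<alpha> \<beta> = 1 - \<alpha> * pp \<beta>" by (simp add: rho_pp)
  ultimately have "poa ?V F n A \<le> 1 / rho \<alpha> \<beta> + ee \<beta> N" using RA(2) ratio unfolding eN_def by simp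
  then show ?thesis using RA(1) by blast
qed

end

context
  fixes \<alpha> :: real and \<beta> :: nat
  assumes a0: "0 \<le> \<alpha>" and a1: "\<alpha> \<le> 1" and b1: "1 \<le> \<beta>"
begin

lemma rho_pos: "0 < rho \<alpha> \<beta>" using rho_ge1[OF a0 a1 b1] by simp

lemma poa_lower:
  assumes G: "valid_game n R A"
  shows "1 / rho \<alpha> \<beta> \<le> poa (Vab \<alpha> \<beta>) (Fab \<alpha> \<beta>) n A"
proof -
  let ?V = "Vab \<alpha> \<beta>" and ?F = "Fab \<alpha> \<beta>"
  have V: "\<And>m. 0 \<le> ?V m" using Vab_nonneg[OF a0 a1] by blast
  have r1: "1 / rho \<alpha> \<beta> \<le> 1" using rho_ge1[OF a0 a1 b1] by simp
  show ?thesis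
  proof (cases "opt_welfare ?V n A = 0")
    case True then show ?thesis unfolding poa_def using r1 by simp
  next
    case False
    have "opt_welfare ?V n A \<in> welfare ?V n ` profiles n A"
      unfolding opt_welfare_def using profiles_finite[OF G] profiles_nonempty[OF G] by (intro Max_in) auto
    then obtain ob where ob: "ob \<in> profiles n A" "welfare ?V n ob = opt_welfare ?V n A" by auto
    have "0 \<le> welfare ?V n ob" by (rule welfare_nonneg[OF V])
    then have optpos: "0 < opt_welfare ?V n A" using False ob by simp
    obtain a0' where "is_NE ?F n A a0'" using NE_exists[OF G] by blast
    then have ne: "(\<lambda>a. welfare ?V n a / opt_welfare ?V n A) ` {a. is_NE ?F n A a} \<noteq> {}" by auto
    have "1 / rho \<alpha> \<beta> \<le> Inf ((\<lambda>a. welfare ?V n a / opt_welfare ?V n A) ` {a. is_NE ?F n A a})"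
    proof (rule cInf_greatest[OF ne])
      fix r assume "r \<in> (\<lambda>a. welfare ?V n a / opt_welfare ?V n A) ` {a. is_NE ?F n A a}"
      then obtain a where a: "is_NE ?F n A a" "r = welfare ?V n a / opt_welfare ?V n A" by auto
      have "welfare ?V n ob \<le> rho \<alpha> \<beta> * welfare ?V n a"
        by (rule smooth[OF G a(1) ob(1)]) (simp_all add: res_ineq[OF a0 a1 b1])
      then have "opt_welfare ?V n A \<le> rho \<alpha> \<beta> * welfare ?V n a" using ob by simp
      then show "1 / rho \<alpha> \<beta> \<le> r" unfolding a(2) using optpos rho_pos
        by (simp add: field_simps)
    qed
    then show ?thesis unfolding poa_def using False by simp
  qed
qed

lemma class_nonempty: "{poa W F n A | n R A. valid_game n R A} \<noteq> {}"
proof -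
  have "valid_game 0 {} A" for A unfolding valid_game_def by simp
  then show ?thesis by blast
qed

lemma class_lower: "1 / rho \<alpha> \<beta> \<le> poa_class (Vab \<alpha> \<beta>) (Fab \<alpha> \<beta>)"
  unfolding poa_class_def using poa_lower by (intro cInf_greatest[OF class_nonempty]) auto

lemma class_upper: "poa_class (Vab \<alpha> \<beta>) F \<le> 1 / rho \<alpha> \<beta>"
proof (rule ccontr)
  let ?S = "{poa (Vab \<alpha> \<beta>) F n A | n R A. valid_game n R A}"
  assume "\<not> poa_class (Vab \<alpha> \<beta>) F \<le> 1 / rho \<alpha> \<beta>"
  then have gt: "0 < poa_class (Vab \<alpha> \<beta>) F - 1 / rho \<alpha> \<beta>" by simp
  have bdd: "bdd_below ?S"
    using poa_nonneg Vab_nonneg[OF a0 a1] by (intro bdd_belowI[of _ 0]) auto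
  have "(\<lambda>N. ee \<beta> N) \<longlonglongrightarrow> 0" using ee_sums summable_LIMSEQ_zero sums_summable by blast
  from order_tendstoD(2)[OF this gt] obtain N0 where N0: "\<And>N. N \<ge> N0 \<Longrightarrow> ee \<beta> N < poa_class (Vab \<alpha> \<beta>) F - 1 / rho \<alpha> \<beta>"
    unfolding eventually_sequentially by blast
  define N where "N = max N0 \<beta>"
  obtain n R A where g: "valid_game n R A" "poa (Vab \<alpha> \<beta>) F n A \<le> 1 / rho \<alpha> \<beta> + ee \<beta> N"
    using instance_bound[OF a0 a1 b1, of N F] unfolding N_def by auto
  have "poa_class (Vab \<alpha> \<beta>) F \<le> poa (Vab \<alpha> \<beta>) F n A"
    unfolding poa_class_def using g(1) by (intro cInf_lower[OF _ bdd]) auto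
  then show False using g(2) N0[of N] unfolding N_def by simp
qed

end

theorem lemma1:
  fixes \<alpha> :: real and \<beta> :: nat
  assumes "0 \<le> \<alpha>" and "\<alpha> \<le> 1" and "1 \<le> \<beta>"
  shows "poa_class (Vab \<alpha> \<beta>) (Fab \<alpha> \<beta>) = 1 / rho \<alpha> \<beta>
         \<and> (\<forall>F :: nat \<Rightarrow> real. poa_class (Vab \<alpha> \<beta>) F \<le> poa_class (Vab \<alpha> \<beta>) (Fab \<alpha> \<beta>))"
proof -
  have eq: "poa_class (Vab \<alpha> \<beta>) (Fab \<alpha> \<beta>) = 1 / rho \<alpha> \<beta>"
    using class_lower[OF assms] class_upper[OF assms] by (rule antisym[rotated])
  show ?thesis using eq class_upper[OF assms] by simp
qed

end
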